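(* Let $A\ge1$ be an integer, $N=2A$, and let $\mathbf{m}=(m_0,\dots,m_N)^\top$ with $m_A=N$ and $m_i=0$ for $i\ne A$; let $\mathbf{M}=\mathrm{diag}(m_0,\dots,m_N)$. Let $\mathbf{Q}_N$ be the tridiagonal matrix with $(\mathbf{Q}_N)_{kk}=-N$, $(\mathbf{Q}_N)_{k+1,k}=N-k$, $(\mathbf{Q}_N)_{k-1,k}=k$ (indices $0,\dots,N$) and zeros elsewhere. For $\mu\ge0$ let $\overline{m}(\mu)$ be the dominant (largest) eigenvalue of $\mathbf{M}+\mu\mathbf{Q}_N$ and $\overline{r}(\mu)=\overline{m}(\mu)/N$. Then for each fixed $\mu\ge0$, $$\lim_{A\to\infty}\overline{r}(\mu)=\sqrt{\mu^2+1}-\mu.$$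
   Context: $\overline{m}(\mu)$ equals the mean fitness $\mathbf{m}\cdot\mathbf{p}$ of the positive normalized eigenvector $\mathbf{p}$ of $\mathbf{M}+\mu\mathbf{Q}_N$ (Crow–Kimura quasispecies model with permutation invariant fitness landscape). *)

theory Defs
  imports "Jordan_Normal_Form.Char_Poly"
begin

definition fit :: "nat \<Rightarrow> nat \<Rightarrow> real" where
  "fit A i = (if i = A then real (2 * A) else 0)"

definition M_mat :: "nat \<Rightarrow> real mat" where
  "M_mat A = mat (2 * A + 1) (2 * A + 1) (\<lambda>(i, j). if i = j then fit A i else 0)"

definition Q_mat :: "nat \<Rightarrow> real mat" where
  "Q_mat N = mat (N + 1) (N + 1) (\<lambda>(i, j).
      if i = j then - real N
      else if i = j + 1 then real N - real j
      else if j = i + 1 then real j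
      else 0)"

definition dom_eig :: "real mat \<Rightarrow> real" where
  "dom_eig B = Max {k. eigenvalue B k}"

definition mbar :: "nat \<Rightarrow> real \<Rightarrow> real" where
  "mbar A \<mu> = dom_eig (M_mat A + \<mu> \<cdot>\<^sub>m Q_mat (2 * A))"

definition rbar :: "nat \<Rightarrow> real \<Rightarrow> real" where
  "rbar A \<mu> = mbar A \<mu> / real (2 * A)"

end

theory Submission imports Defs "Jordan_Normal_Form.Spectral_Radius" begin



locale tri =
  fixes n :: nat and a c d :: "nat \<Rightarrow> real"
  assumes n2: "2 \<le> n"
    and cpos: "\<And>k. k + 1 < n \<Longrightarrow> 0 < c k"
    and dpos: "\<And>k. 0 < k \<Longrightarrow> k < n \<Longrightarrow> 0 < d k"
begin

definition TM :: "real mat" where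
  "TM = mat n n (\<lambda>(i,j). if i = j then a i else if i = j + 1 then d i else if j = i + 1 then c i else 0)"

definition T :: "(nat \<Rightarrow> real) \<Rightarrow> nat \<Rightarrow> real" where
  "T w k = a k * w k + (if 0 < k then d k * w (k - 1) else 0) + (if k + 1 < n then c k * w (k + 1) else 0)"

lemma TM_carrier: "TM \<in> carrier_mat n n" unfolding TM_def by simp

lemma TM_mult: assumes k: "k < n" shows "(TM *\<^sub>v vec n w) $ k = T w k"
proof -
  have "(TM *\<^sub>v vec n w) $ k = (\<Sum>j<n. (if k = j then a k else if k = j + 1 then d k else if j = k + 1 then c k else 0) * w j)"
    using k unfolding TM_def by (simp add: scalar_prod_def lessThan_atLeast0)
  also have "\<dots> = (\<Sum>j<n. (if j = k then a k * w j else 0) + (if 0 < k \<and> j = k - 1 then d k * w j else 0) + (if j = k + 1 then c k * w j else 0))"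
    by (rule sum.cong) auto
  also have "\<dots> = T w k"
    unfolding sum.distrib T_def using k by (auto simp: sum.delta')
  finally show ?thesis .
qed

lemma T_cong: assumes "k < n" "\<And>i. i < n \<Longrightarrow> f i = g i" shows "T f k = T g k"
  using assms unfolding T_def by auto

lemma T_scale: "T (\<lambda>i. s * f i) k = s * T f k"
  unfolding T_def by (simp add: algebra_simps)

fun V :: "real \<Rightarrow> nat \<Rightarrow> real" where
  "V l 0 = 1"
| "V l (Suc 0) = (l - a 0) / c 0"
| "V l (Suc (Suc k)) = ((l - a (Suc k)) * V l (Suc k) - d (Suc k) * V l k) / c (Suc k)"

definition F :: "real \<Rightarrow> real" where
  "F l = (l - a (n - 1)) * V l (n - 1) - d (n - 1) * V l (n - 2)"

lemma V_rec: assumes "k + 1 < n" shows "T (V l) k = l * V l k"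
proof (cases k)
  case 0
  then show ?thesis using assms cpos[of 0] unfolding T_def by (simp add: field_simps)
next
  case (Suc j)
  then show ?thesis using assms cpos[of k] unfolding T_def by (simp add: field_simps)
qed

lemma V_last: "T (V l) (n - 1) = l * V l (n - 1) - F l"
proof -
  have "n - 1 - 1 = n - 2" by simp
  then show ?thesis using n2 unfolding T_def F_def by (simp add: algebra_simps)
qed

lemma V_eq: assumes "k < n" shows "T (V l) k = l * V l k - (if k = n - 1 then F l else 0)"
  using V_rec[of k l] V_last[of l] assms by (cases "k + 1 < n") (auto)

lemma F_zero_eig: assumes "F l = 0" shows "eigenvalue TM l"
  unfolding eigenvalue_def eigenvector_def
proof (intro exI conjI)
  show "vec n (V l) \<in> carrier_vec (dim_row TM)" using TM_carrier by simp
  show "vec n (V l) \<noteq> 0\<^sub>v (dim_row TM)"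
  proof
    assume "vec n (V l) = 0\<^sub>v (dim_row TM)"
    then have "vec n (V l) $ 0 = 0\<^sub>v n $ 0" using TM_carrier by simp
    then show False using n2 by simp
  qed
  show "TM *\<^sub>v vec n (V l) = l \<cdot>\<^sub>v vec n (V l)"
    by (rule eq_vecI) (use TM_carrier V_eq assms TM_mult in auto)
qed

lemma eig_F_zero: assumes "eigenvalue TM l" shows "F l = 0"
proof -
  from assms obtain w where w: "w \<in> carrier_vec n" "w \<noteq> 0\<^sub>v n" "TM *\<^sub>v w = l \<cdot>\<^sub>v w"
    unfolding eigenvalue_def eigenvector_def using TM_carrier by auto
  define W where "W i = w $ i" for i
  have wv: "w = vec n W" using w(1) unfolding W_def by auto
  have row: "T W k = l * W k" if "k < n" for k
  proof -
    have "(TM *\<^sub>v w) $ k = l * W k" using w(3) w(1) that unfolding W_def by simp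
    then show ?thesis using TM_mult[OF that, of W] wv by simp
  qed
  have main: "k < n \<longrightarrow> W k = W 0 * V l k \<and> (Suc k < n \<longrightarrow> W (Suc k) = W 0 * V l (Suc k))" for k
  proof (induction k)
    case 0
    have "Suc 0 < n \<Longrightarrow> W 1 = W 0 * V l 1"
      using row[of 0] cpos[of 0] unfolding T_def by (simp add: field_simps)
    then show ?case by simp
  next
    case (Suc k)
    show ?case
    proof
      assume sk: "Suc k < n"
      have "Suc (Suc k) < n \<Longrightarrow> W (Suc (Suc k)) = W 0 * V l (Suc (Suc k))"
      proof -
        assume ssk: "Suc (Suc k) < n"
        have h1: "W k = W 0 * V l k" "W (Suc k) = W 0 * V l (Suc k)" using Suc sk by auto
        have "d (Suc k) * W k + a (Suc k) * W (Suc k) + c (Suc k) * W (Suc (Suc k)) = l * W (Suc k)"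
          using row[of "Suc k"] ssk unfolding T_def by (simp add: algebra_simps)
        then show ?thesis using cpos[of "Suc k"] ssk h1 by (simp add: field_simps)
      qed
      then show "W (Suc k) = W 0 * V l (Suc k) \<and> (Suc (Suc k) < n \<longrightarrow> W (Suc (Suc k)) = W 0 * V l (Suc (Suc k)))"
        using Suc sk by auto
    qed
  qed
  have mk: "W k = W 0 * V l k" if "k < n" for k using main[of k] that by blast
  have W0: "W 0 \<noteq> 0"
  proof
    assume "W 0 = 0"
    then have "\<forall>k<n. W k = 0" using mk by (metis mult_zero_left)
    then have "w = 0\<^sub>v n" using wv by (auto intro!: eq_vecI)
    then show False using w(2) by simp
  qed
  have "T W (n - 1) = T (\<lambda>i. W 0 * V l i) (n - 1)"
    by (rule T_cong, use n2 in simp, rule mk)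
  then have "l * W (n - 1) = W 0 * (l * V l (n - 1) - F l)"
    using row[of "n - 1"] n2 T_scale V_last by simp
  moreover have "W (n - 1) = W 0 * V l (n - 1)" using n2 by (intro mk) simp
  ultimately have "W 0 * F l = 0" by (simp add: algebra_simps)
  then show ?thesis using W0 by simp
qed

lemma V_cont: "isCont (\<lambda>l. V l k) x \<and> isCont (\<lambda>l. V l (Suc k)) x"
proof (induction k)
  case 0
  then show ?case unfolding V.simps divide_inverse by (auto intro!: continuous_intros)
next
  case (Suc k)
  then show ?case unfolding V.simps divide_inverse by (auto intro!: continuous_intros)
qed

lemma F_cont: "isCont F x"
  unfolding F_def using V_cont[where k="n - 1" and x=x] V_cont[where k="n - 2" and x=x] by (auto intro!: continuous_intros)

end



context tri begin

fun hm :: "real \<Rightarrow> nat \<Rightarrow> real" where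
  "hm l 0 = F l"
| "hm l (Suc k) = min (hm l k) (V l k)"

lemma hm_pos: "0 < hm l k \<longleftrightarrow> 0 < F l \<and> (\<forall>i<k. 0 < V l i)"
  by (induction k) (auto simp: less_Suc_eq)

lemma hm_nonneg: "0 \<le> hm l k \<longleftrightarrow> 0 \<le> F l \<and> (\<forall>i<k. 0 \<le> V l i)"
  by (induction k) (auto simp: less_Suc_eq)

lemma hm_cont: "isCont (\<lambda>l. hm l k) x"
proof (induction k)
  case 0
  then show ?case using F_cont by simp
next
  case (Suc k)
  then show ?case using V_cont[where k=k and x=x] by (auto intro!: continuous_intros)
qed

lemma ub:
  assumes upos: "\<And>k. k < n \<Longrightarrow> 0 < u k"
    and ubd: "\<And>k. k < n \<Longrightarrow> T u k \<le> C * u k"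
    and l: "C < l"
  shows "0 < F l" "\<And>k. k < n \<Longrightarrow> 0 < V l k"
proof -
  have main: "Suc k < n \<longrightarrow> 0 < V l k \<and> V l k * u (Suc k) < V l (Suc k) * u k" for k
  proof (induction k)
    case 0
    show ?case
    proof
      assume 1: "Suc 0 < n"
      have "a 0 * u 0 + c 0 * u 1 \<le> C * u 0" using ubd[of 0] 1 unfolding T_def by simp
      moreover have "C * u 0 < l * u 0" using l upos[of 0] 1 by simp
      ultimately have "c 0 * u 1 < (l - a 0) * u 0" by (simp add: algebra_simps)
      moreover have "V l 1 * u 0 = (l - a 0) * u 0 / c 0" by simp
      ultimately show "0 < V l 0 \<and> V l 0 * u (Suc 0) < V l (Suc 0) * u 0"
        using cpos[of 0] 1 by (simp add: field_simps)
    qed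
  next
    case (Suc k)
    show ?case
    proof
      assume ssk: "Suc (Suc k) < n"
      from Suc ssk have ih: "0 < V l k" "V l k * u (Suc k) < V l (Suc k) * u k" by auto
      have uk: "0 < u k" "0 < u (Suc k)" "0 < u (Suc (Suc k))" using upos ssk by auto
      have vs: "0 < V l (Suc k)"
      proof -
        have "0 < V l k * u (Suc k)" using ih uk by simp
        then have "0 < V l (Suc k) * u k" using ih by linarith
        then show ?thesis using uk zero_less_mult_pos2 by blast
      qed
      have row: "d (Suc k) * u k + a (Suc k) * u (Suc k) + c (Suc k) * u (Suc (Suc k)) \<le> C * u (Suc k)"
        using ubd[of "Suc k"] ssk unfolding T_def by (simp add: algebra_simps)
      have cp: "0 < c (Suc k)" using cpos[of "Suc k"] ssk by simp
      have dp: "0 < d (Suc k)" using dpos[of "Suc k"] ssk by simp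
      define X where "X = V l (Suc (Suc k))"
      have X: "c (Suc k) * X = (l - a (Suc k)) * V l (Suc k) - d (Suc k) * V l k"
        unfolding X_def using cp by simp
      have f1: "c (Suc k) * (X * u (Suc k)) = (l - a (Suc k)) * V l (Suc k) * u (Suc k) - d (Suc k) * (V l k * u (Suc k))"
      proof -
        have "c (Suc k) * (X * u (Suc k)) = (c (Suc k) * X) * u (Suc k)" by (simp add: algebra_simps)
        also have "\<dots> = ((l - a (Suc k)) * V l (Suc k) - d (Suc k) * V l k) * u (Suc k)" using X by simp
        also have "\<dots> = (l - a (Suc k)) * V l (Suc k) * u (Suc k) - d (Suc k) * (V l k * u (Suc k))"
          by (simp add: algebra_simps)
        finally show ?thesis .
      qed
      have f2: "d (Suc k) * (V l k * u (Suc k)) < d (Suc k) * (V l (Suc k) * u k)"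
        using ih(2) dp by simp
      have f3: "(l - a (Suc k)) * V l (Suc k) * u (Suc k) - d (Suc k) * (V l (Suc k) * u k)
           = V l (Suc k) * ((l - a (Suc k)) * u (Suc k) - d (Suc k) * u k)" by (simp add: algebra_simps)
      have f4: "c (Suc k) * (V l (Suc k) * u (Suc (Suc k))) < V l (Suc k) * ((l - a (Suc k)) * u (Suc k) - d (Suc k) * u k)"
      proof -
        have "C * u (Suc k) < l * u (Suc k)" using l uk by simp
        then have "c (Suc k) * u (Suc (Suc k)) < (l - a (Suc k)) * u (Suc k) - d (Suc k) * u k"
          using row by (simp add: algebra_simps)
        then have "V l (Suc k) * (c (Suc k) * u (Suc (Suc k))) < V l (Suc k) * ((l - a (Suc k)) * u (Suc k) - d (Suc k) * u k)"
          using vs by simp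
        then show ?thesis by (simp add: algebra_simps)
      qed
      have "c (Suc k) * (V l (Suc k) * u (Suc (Suc k))) < c (Suc k) * (X * u (Suc k))"
        using f1 f2 f3 f4 by linarith
      then have "V l (Suc k) * u (Suc (Suc k)) < X * u (Suc k)" using cp by simp
      then show "0 < V l (Suc k) \<and> V l (Suc k) * u (Suc (Suc k)) < V l (Suc (Suc k)) * u (Suc k)"
        using vs X_def by simp
    qed
  qed
  show vpos: "0 < V l k" if "k < n" for k
  proof (cases "Suc k < n")
    case True then show ?thesis using main by blast
  next
    case False
    then have k: "k = Suc (n - 2)" using that n2 by simp
    have "Suc (n - 2) < n" using n2 by simp
    then have "0 < V l (n - 2)" "V l (n - 2) * u (Suc (n - 2)) < V l (Suc (n - 2)) * u (n - 2)"
      using main[of "n - 2"] by auto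
    moreover have "0 < u (n - 2)" "0 < u (Suc (n - 2))" using upos n2 by auto
    ultimately have "0 < V l (Suc (n - 2)) * u (n - 2)"
      by (metis mult_pos_pos order_less_trans)
    then show ?thesis using k \<open>0 < u (n - 2)\<close> zero_less_mult_pos2 by blast
  qed
  show "0 < F l"
  proof -
    have e: "n - 1 = Suc (n - 2)" using n2 by simp
    have "Suc (n - 2) < n" using n2 by simp
    then have m: "V l (n - 2) * u (n - 1) < V l (n - 1) * u (n - 2)"
      using main[of "n - 2"] e by auto
    have up: "0 < u (n - 1)" "0 < u (n - 2)" using upos n2 by auto
    have vp: "0 < V l (n - 1)" using vpos n2 by simp
    have dp: "0 < d (n - 1)" using dpos[of "n - 1"] n2 by simp
    have row: "a (n - 1) * u (n - 1) + d (n - 1) * u (n - 2) \<le> C * u (n - 1)"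
    proof -
      have e2: "n - 1 - 1 = n - 2" by simp
      have "n - 1 + 1 = n" using n2 by simp
      then show ?thesis using ubd[of "n - 1"] n2 e2 unfolding T_def by (simp add: algebra_simps)
    qed
    have g1: "F l * u (n - 1) = (l - a (n - 1)) * V l (n - 1) * u (n - 1) - d (n - 1) * (V l (n - 2) * u (n - 1))"
      unfolding F_def by (simp add: algebra_simps)
    have g2: "d (n - 1) * (V l (n - 2) * u (n - 1)) < d (n - 1) * (V l (n - 1) * u (n - 2))"
      using m dp by simp
    have g3: "(l - a (n - 1)) * V l (n - 1) * u (n - 1) - d (n - 1) * (V l (n - 1) * u (n - 2))
       = V l (n - 1) * ((l - a (n - 1)) * u (n - 1) - d (n - 1) * u (n - 2))" by (simp add: algebra_simps)
    have g4: "0 < V l (n - 1) * ((l - a (n - 1)) * u (n - 1) - d (n - 1) * u (n - 2))"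
    proof -
      have "C * u (n - 1) < l * u (n - 1)" using l up by simp
      then have "0 < (l - a (n - 1)) * u (n - 1) - d (n - 1) * u (n - 2)" using row by (simp add: algebra_simps)
      then show ?thesis using vp by simp
    qed
    have "0 < F l * u (n - 1)" using g1 g2 g3 g4 by linarith
    then show ?thesis using up by (simp add: zero_less_mult_iff)
  qed
qed

lemma ub_eig:
  assumes "\<And>k. k < n \<Longrightarrow> 0 < u k" "\<And>k. k < n \<Longrightarrow> T u k \<le> C * u k" "eigenvalue TM l"
  shows "l \<le> C"
proof (rule ccontr)
  assume "\<not> l \<le> C"
  then have "0 < F l" using ub(1)[OF assms(1,2)] by simp
  then show False using eig_F_zero[OF assms(3)] by simp
qed

lemma sum_shift1: "(\<Sum>k<Suc m. if 0 < k then g k else 0) = (\<Sum>j<m. g (Suc j)) " for g :: "nat \<Rightarrow> real"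
  unfolding sum.lessThan_Suc_shift by simp

lemma sum_shift2: "(\<Sum>k<Suc m. if k + 1 < Suc m then g k else 0) = (\<Sum>j<m. g j) " for g :: "nat \<Rightarrow> real"
  by (simp add: sum.lessThan_Suc)

lemma pairing:
  assumes bal: "\<And>k. k + 1 < n \<Longrightarrow> p (Suc k) * d (Suc k) = p k * c k"
  shows "(\<Sum>k<n. p k * v k * T u k) = (\<Sum>k<n. p k * u k * T v k)"
proof -
  obtain m where m: "n = Suc m" using n2 by (cases n) auto
  have A: "(\<Sum>k<n. p k * v k * T u k) = (\<Sum>k<n. p k * v k * a k * u k)
     + (\<Sum>k<n. if 0 < k then p k * d k * v k * u (k - 1) else 0)
     + (\<Sum>k<n. if k + 1 < n then p k * c k * v k * u (k + 1) else 0)"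
    unfolding T_def sum.distrib[symmetric] by (rule sum.cong) (auto simp: algebra_simps)
  have B: "(\<Sum>k<n. p k * u k * T v k) = (\<Sum>k<n. p k * v k * a k * u k)
     + (\<Sum>k<n. if 0 < k then p k * d k * u k * v (k - 1) else 0)
     + (\<Sum>k<n. if k + 1 < n then p k * c k * u k * v (k + 1) else 0)"
    unfolding T_def sum.distrib[symmetric] by (rule sum.cong) (auto simp: algebra_simps)
  have C1: "(\<Sum>k<n. if 0 < k then p k * d k * v k * u (k - 1) else 0)
        = (\<Sum>k<n. if k + 1 < n then p k * c k * u k * v (k + 1) else 0)"
  proof -
    have "(\<Sum>k<n. if 0 < k then p k * d k * v k * u (k - 1) else 0) = (\<Sum>j<m. p (Suc j) * d (Suc j) * v (Suc j) * u j)"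
      unfolding m sum_shift1 by simp
    also have "\<dots> = (\<Sum>j<m. p j * c j * u j * v (Suc j))"
      by (rule sum.cong) (use bal m in auto)
    also have "\<dots> = (\<Sum>k<n. if k + 1 < n then p k * c k * u k * v (k + 1) else 0)"
      unfolding m sum_shift2 by simp
    finally show ?thesis .
  qed
  have C2: "(\<Sum>k<n. if 0 < k then p k * d k * u k * v (k - 1) else 0)
        = (\<Sum>k<n. if k + 1 < n then p k * c k * v k * u (k + 1) else 0)"
  proof -
    have "(\<Sum>k<n. if 0 < k then p k * d k * u k * v (k - 1) else 0) = (\<Sum>j<m. p (Suc j) * d (Suc j) * u (Suc j) * v j)"
      unfolding m sum_shift1 by simp
    also have "\<dots> = (\<Sum>j<m. p j * c j * v j * u (Suc j))"
      by (rule sum.cong) (use bal m in auto)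
    also have "\<dots> = (\<Sum>k<n. if k + 1 < n then p k * c k * v k * u (k + 1) else 0)"
      unfolding m sum_shift2 by simp
    finally show ?thesis .
  qed
  show ?thesis unfolding A B C1 C2 by simp
qed

end



context tri begin

lemma lb:
  assumes u'pos: "\<And>k. k < n \<Longrightarrow> 0 < u' k" and u'bd: "\<And>k. k < n \<Longrightarrow> T u' k \<le> C' * u' k"
    and unn: "\<And>k. k < n \<Longrightarrow> 0 \<le> u k" and i: "i < n" "0 < u i"
    and ulb: "\<And>k. k < n \<Longrightarrow> c0 * u k \<le> T u k"
    and ppos: "\<And>k. k < n \<Longrightarrow> 0 < p k"
    and bal: "\<And>k. k + 1 < n \<Longrightarrow> p (Suc k) * d (Suc k) = p k * c k"
  shows "\<exists>l. eigenvalue TM l \<and> c0 \<le> l"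
proof -
  define L where "L = C' + 1"
  have hL: "0 < hm L n" unfolding hm_pos using ub[OF u'pos u'bd, of L] unfolding L_def by auto
  define a' where "a' = min (a 0 - 1) L"
  have "V a' 1 < 0" using cpos[of 0] n2 unfolding a'_def by (simp add: divide_neg_pos)
  moreover have "(1::nat) < n" using n2 by simp
  ultimately have "\<not> (\<forall>i<n. 0 < V a' i)" by force
  then have ha: "hm a' n \<le> 0" using hm_pos[of a' n] by (meson not_less)
  have "a' \<le> L" unfolding a'_def by simp
  from IVT[of "\<lambda>l. hm l n" a' 0 L, OF ha less_imp_le[OF hL] this] hm_cont
  obtain x where x: "hm x n = 0" by blast
  then have nn: "0 \<le> F x" "\<And>k. k < n \<Longrightarrow> 0 \<le> V x k" using hm_nonneg[of x n] by auto
  have vpos: "k < n \<longrightarrow> 0 < V x k" for k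
  proof (induction k)
    case 0 then show ?case by simp
  next
    case (Suc k)
    show ?case
    proof
      assume sk: "Suc k < n"
      have ih: "0 < V x k" using Suc sk by simp
      have dp: "0 < d (Suc k)" using dpos[of "Suc k"] sk by simp
      show "0 < V x (Suc k)"
      proof (rule ccontr)
        assume "\<not> 0 < V x (Suc k)"
        then have z: "V x (Suc k) = 0" using nn(2)[OF sk] by simp
        show False
        proof (cases "Suc (Suc k) < n")
          case True
          have cp: "0 < c (Suc k)" using cpos[of "Suc k"] True by simp
          have "V x (Suc (Suc k)) = - d (Suc k) * V x k / c (Suc k)" using z by simp
          also have "\<dots> < 0" using dp ih cp by (simp add: divide_neg_pos)
          finally show False using nn(2)[OF True] by simp
        next
          case False
          then have e: "n - 1 = Suc k" "n - 2 = k" using sk by auto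
          have "F x = - d (Suc k) * V x k" unfolding F_def e using z by simp
          also have "\<dots> < 0" using dp ih by simp
          finally show False using nn(1) by simp
        qed
      qed
    qed
  qed
  have F0: "F x = 0"
  proof -
    have "\<not> 0 < hm x n" using x by simp
    then have "\<not> 0 < F x" using hm_pos[of x n] vpos by auto
    then show ?thesis using nn(1) by simp
  qed
  have eig: "eigenvalue TM x" using F_zero_eig[OF F0] .
  have Tv: "T (V x) k = x * V x k" if "k < n" for k using V_eq[OF that, of x] F0 by simp
  define S where "S = (\<Sum>k<n. p k * u k * V x k)"
  have vp: "0 \<le> V x k" "0 < V x k" if "k < n" for k using vpos[of k] that by auto
  have pp: "0 \<le> p k" if "k < n" for k using ppos[OF that] by simp
  have Spos: "0 < S" unfolding S_def
    by (rule sum_pos2[of _ i]) (use i ppos vp pp unn in \<open>auto intro!: mult_nonneg_nonneg\<close>)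
  have "c0 * S = (\<Sum>k<n. p k * V x k * (c0 * u k))" unfolding S_def sum_distrib_left
    by (rule sum.cong) (auto simp: algebra_simps)
  also have "\<dots> \<le> (\<Sum>k<n. p k * V x k * T u k)"
    by (rule sum_mono) (use pp vp ulb in \<open>auto intro!: mult_left_mono mult_nonneg_nonneg\<close>)
  also have "\<dots> = (\<Sum>k<n. p k * u k * T (V x) k)" by (rule pairing[OF bal])
  also have "\<dots> = x * S" unfolding S_def sum_distrib_left
    by (rule sum.cong) (auto simp: Tv algebra_simps)
  finally have "c0 * S \<le> x * S" .
  then have "c0 \<le> x" using Spos by simp
  then show ?thesis using eig by blast
qed

lemma max_bounds:
  assumes u'pos: "\<And>k. k < n \<Longrightarrow> 0 < u' k" and u'bd: "\<And>k. k < n \<Longrightarrow> T u' k \<le> C' * u' k"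
    and unn: "\<And>k. k < n \<Longrightarrow> 0 \<le> u k" and i: "i < n" "0 < u i"
    and ulb: "\<And>k. k < n \<Longrightarrow> c0 * u k \<le> T u k"
    and ppos: "\<And>k. k < n \<Longrightarrow> 0 < p k"
    and bal: "\<And>k. k + 1 < n \<Longrightarrow> p (Suc k) * d (Suc k) = p k * c k"
  shows "c0 \<le> dom_eig TM" "dom_eig TM \<le> C'"
proof -
  have fin: "finite {k. eigenvalue TM k}"
    using card_finite_spectrum(1)[OF TM_carrier] unfolding spectrum_def .
  obtain l where l: "eigenvalue TM l" "c0 \<le> l" using lb[OF assms] by blast
  have "l \<le> Max {k. eigenvalue TM k}" using fin l by simp
  then show "c0 \<le> dom_eig TM" unfolding dom_eig_def using l by simp
  show "dom_eig TM \<le> C'" unfolding dom_eig_def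
    using fin l ub_eig[OF u'pos u'bd] by (subst Max_le_iff) auto
qed

end



definition aa :: "nat \<Rightarrow> real \<Rightarrow> nat \<Rightarrow> real" where
  "aa A \<mu> k = fit A k - \<mu> * real (2 * A)"
definition cc :: "real \<Rightarrow> nat \<Rightarrow> real" where
  "cc \<mu> k = \<mu> * (real k + 1)"
definition dd :: "nat \<Rightarrow> real \<Rightarrow> nat \<Rightarrow> real" where
  "dd A \<mu> k = \<mu> * (real (2 * A) - real k + 1)"

lemma tri_inst: assumes "1 \<le> A" "0 < \<mu>" shows "tri (2 * A + 1) (cc \<mu>) (dd A \<mu>)"
  by unfold_locales (use assms in \<open>auto simp: cc_def dd_def\<close>)

lemma mat_eq: assumes "1 \<le> A" "0 < \<mu>" shows "M_mat A + \<mu> \<cdot>\<^sub>m Q_mat (2 * A) = tri.TM (2 * A + 1) (aa A \<mu>) (cc \<mu>) (dd A \<mu>)"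
  unfolding tri.TM_def[OF tri_inst[OF assms]]
  by (rule eq_matI) (auto simp: M_mat_def Q_mat_def aa_def cc_def dd_def fit_def algebra_simps of_nat_diff)

lemma T_inst: assumes "1 \<le> A" "0 < \<mu>" shows "tri.T (2 * A + 1) (aa A \<mu>) (cc \<mu>) (dd A \<mu>) u k =
   aa A \<mu> k * u k + (if 0 < k then dd A \<mu> k * u (k - 1) else 0) + (if k < 2 * A then cc \<mu> k * u (k + 1) else 0)"
  unfolding tri.T_def[OF tri_inst[OF assms]] by simp

definition dst :: "nat \<Rightarrow> nat \<Rightarrow> nat" where "dst k A = (if A \<le> k then k - A else A - k)"




lemma core_ub: fixes A j \<mu> x :: real
  assumes "0 < \<mu>" "0 < x" "x < 1" "\<mu> * x^2 + 2 * x - \<mu> = 0" "1 \<le> j"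
  shows "- (\<mu> * (2 * A)) * x + \<mu> * (A - j + 1) + \<mu> * (A + j + 1) * x^2 \<le> (2 * A * (1 - \<mu> + \<mu> * x) + 2 * \<mu>) * x"
proof -
  have E: "(- (\<mu> * (2 * A)) * x + \<mu> * (A - j + 1) + \<mu> * (A + j + 1) * x^2) - (2 * A * (1 - \<mu> + \<mu> * x) + 2 * \<mu>) * x
     = (j + 1 - A) * (\<mu> * x^2 + 2 * x - \<mu>) + 2 * \<mu> - 2 * (\<mu> * x) - 2 * ((j + 1) * x)"
    by (simp add: algebra_simps power2_eq_square)
  have "2 * x \<le> (j + 1) * x" using assms by (intro mult_right_mono) auto
  moreover have "\<mu> - 2 * x = \<mu> * x^2" using assms(4) by simp
  moreover have "\<mu> * x^2 \<le> \<mu> * x" using assms by (simp add: power2_eq_square)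
  ultimately have H: "2 * \<mu> - 2 * (\<mu> * x) - 2 * ((j + 1) * x) \<le> 0" by linarith
  show ?thesis using E H assms(4) by simp
qed

lemma dst_gt: "A < k \<Longrightarrow> dst k A = k - A" and dst_lt: "k < A \<Longrightarrow> dst k A = A - k" and dst_eq: "dst A A = 0"
  by (auto simp: dst_def)

lemma ub_row:
  fixes x \<mu> :: real
  assumes A: "1 \<le> A" and mu: "0 < \<mu>" and x: "0 < x" "x < 1" "\<mu> * x^2 + 2 * x - \<mu> = 0" and k: "k < 2 * A + 1"
  shows "tri.T (2 * A + 1) (aa A \<mu>) (cc \<mu>) (dd A \<mu>) (\<lambda>k. x ^ dst k A) k
     \<le> (2 * real A * (1 - \<mu> + \<mu> * x) + 2 * \<mu>) * x ^ dst k A"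
proof -
  define R where "R = 2 * real A * (1 - \<mu> + \<mu> * x) + 2 * \<mu>"
  have cnn: "0 \<le> cc \<mu> i" for i using mu by (simp add: cc_def)
  consider "k = A" | "A < k" | "k < A" by linarith
  then show ?thesis
  proof cases
    case 1
    have "tri.T (2 * A + 1) (aa A \<mu>) (cc \<mu>) (dd A \<mu>) (\<lambda>k. x ^ dst k A) k
        = (2 * real A - \<mu> * (2 * real A)) + \<mu> * (real A + 1) * x + \<mu> * (real A + 1) * x"
    proof -
      have "dst (A - 1) A = 1" "dst (A + 1) A = 1" "dst A A = 0" using A by (auto simp: dst_def)
      then show ?thesis unfolding T_inst[OF A mu] using 1 A
        by (simp add: aa_def cc_def dd_def fit_def of_nat_diff algebra_simps)
    qed
    also have "\<dots> \<le> R" unfolding R_def using mu x by (simp add: algebra_simps)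
    finally show ?thesis using 1 by (simp add: dst_eq R_def)
  next
    case 2
    define j where "j = k - A"
    have j: "1 \<le> j" "k = A + j" using 2 unfolding j_def by auto
    define P where "P = x ^ (j - 1)"
    have P: "0 < P" unfolding P_def using x by simp
    have d0: "dst k A = j" "dst (k - 1) A = j - 1" "dst (k + 1) A = j + 1" using j by (auto simp: dst_def)
    have p1: "x ^ j = P * x" "x ^ (j + 1) = P * x^2" unfolding P_def using j
      by (metis One_nat_def Suc_pred' less_eq_Suc_le power_Suc2 zero_less_one, simp add: power_add[symmetric])
    have "tri.T (2 * A + 1) (aa A \<mu>) (cc \<mu>) (dd A \<mu>) (\<lambda>k. x ^ dst k A) k
        = aa A \<mu> k * (P * x) + dd A \<mu> k * P + (if k < 2 * A then cc \<mu> k * (P * x^2) else 0)"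
      unfolding T_inst[OF A mu] using 2 d0 p1 P_def by simp
    also have "\<dots> \<le> aa A \<mu> k * (P * x) + dd A \<mu> k * P + cc \<mu> k * (P * x^2)"
      using cnn[of k] P by (simp add: zero_le_mult_iff)
    also have "\<dots> = P * (- (\<mu> * (2 * real A)) * x + \<mu> * (real A - real j + 1) + \<mu> * (real A + real j + 1) * x^2)"
      using j by (simp add: aa_def cc_def dd_def fit_def algebra_simps)
    also have "\<dots> \<le> P * (R * x)" unfolding R_def
      using core_ub[OF mu x, of "real j" "real A"] j P by (intro mult_left_mono) auto
    finally show ?thesis using d0 p1 unfolding R_def by (simp add: algebra_simps)
  next
    case 3
    define j where "j = A - k"
    have j: "1 \<le> j" "A = k + j" using 3 unfolding j_def by auto
    define P where "P = x ^ (j - 1)"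
    have P: "0 < P" unfolding P_def using x by simp
    have d0: "dst k A = j" "dst (k + 1) A = j - 1" "0 < k \<Longrightarrow> dst (k - 1) A = j + 1" using j by (auto simp: dst_def)
    have p1: "x ^ j = P * x" "x ^ (j + 1) = P * x^2" unfolding P_def using j
      by (metis One_nat_def Suc_pred' less_eq_Suc_le power_Suc2 zero_less_one, simp add: power_add[symmetric])
    have dnn: "0 \<le> dd A \<mu> k" using mu 3 by (simp add: dd_def)
    have "tri.T (2 * A + 1) (aa A \<mu>) (cc \<mu>) (dd A \<mu>) (\<lambda>k. x ^ dst k A) k
        = aa A \<mu> k * (P * x) + (if 0 < k then dd A \<mu> k * (P * x^2) else 0) + cc \<mu> k * P"
      unfolding T_inst[OF A mu] using 3 d0 p1 P_def by simp
    also have "\<dots> \<le> aa A \<mu> k * (P * x) + dd A \<mu> k * (P * x^2) + cc \<mu> k * P"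
    proof -
      have "0 \<le> dd A \<mu> k * (P * x^2)" using dnn P by simp
      then show ?thesis by (cases "k = 0") simp_all
    qed
    also have "\<dots> = P * (- (\<mu> * (2 * real A)) * x + \<mu> * (real A - real j + 1) + \<mu> * (real A + real j + 1) * x^2)"
      using j by (simp add: aa_def cc_def dd_def fit_def algebra_simps)
    also have "\<dots> \<le> P * (R * x)" unfolding R_def
      using core_ub[OF mu x, of "real j" "real A"] j P by (intro mult_left_mono) auto
    finally show ?thesis using d0 p1 unfolding R_def by (simp add: algebra_simps)
  qed
qed




definition ww :: "real \<Rightarrow> nat \<Rightarrow> nat \<Rightarrow> real" where
  "ww y K m = (if m \<le> K then y ^ m - y ^ (2 * K + 2 - m) else 0)"

lemma ww_formula: assumes that: "m \<le> K + 1" shows "ww y K m = y ^ m - y ^ (2 * K + 2 - m)"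
proof (cases "m \<le> K")
  case False
  then have "m = K + 1" "2 * K + 2 - m = K + 1" using that by auto
  then show ?thesis using False unfolding ww_def by simp
qed (simp add: ww_def)

lemma ww_nonneg: assumes "0 < y" "y < 1" shows "0 \<le> ww y K m"
proof (cases "m \<le> K")
  case True
  then have "y ^ (2 * K + 2 - m) \<le> y ^ m" using assms by (intro power_decreasing) auto
  then show ?thesis using True unfolding ww_def by simp
qed (simp add: ww_def)

lemma ww0_pos: assumes "0 < y" "y < 1" shows "0 < ww y K 0"
proof -
  have "y ^ (2 * K + 2) < 1" using power_Suc_less_one[of y "2*K+1"] assms by simp
  then show ?thesis unfolding ww_def by simp
qed

lemma lb_core: fixes \<mu> y m K A P Q :: real
  assumes mu: "0 < \<mu>" and y: "0 < y" "y < 1" and m: "1 \<le> m" "m \<le> K"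
    and P: "0 < P" and Q: "0 \<le> Q" "Q \<le> P * y^2"
  shows "((\<mu> * A * (1 - y)^2 - \<mu> * K / (1 - y^2)) / y) * (P * y - Q * y)
     \<le> - (2 * A * \<mu>) * (P * y - Q * y) + \<mu> * (A - m + 1) * (P - Q * y^2) + \<mu> * (A + m + 1) * (P * y^2 - Q)"
proof -
  have y2: "0 < 1 - y^2" using y by (simp add: power_less_one_iff)
  have L: "((\<mu> * A * (1 - y)^2 - \<mu> * K / (1 - y^2)) / y) * (P * y - Q * y)
      = \<mu> * A * (1 - y)^2 * (P - Q) - \<mu> * K * ((P - Q) / (1 - y^2))"
    using y by (simp add: field_simps)
  have R: "- (2 * A * \<mu>) * (P * y - Q * y) + \<mu> * (A - m + 1) * (P - Q * y^2) + \<mu> * (A + m + 1) * (P * y^2 - Q)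
      = \<mu> * A * (1 - y)^2 * (P - Q) + \<mu> * ((1 - m) * (P - Q * y^2)) + \<mu> * ((1 + m) * (P * y^2 - Q))"
    by (simp add: algebra_simps power2_eq_square)
  have t1: "0 \<le> \<mu> * ((1 + m) * (P * y^2 - Q))" using mu m Q by simp
  have "0 \<le> Q * y^2" using Q by simp
  have "Q * y^2 \<le> P" proof -
    have "Q * y^2 \<le> P * y^2 * y^2" using Q by (simp add: mult_right_mono)
    also have "\<dots> \<le> P" using P y by (simp add: mult_le_cancel_left1 power_le_one power_mono[of y 1 2, simplified] mult_le_one)
    finally show ?thesis .
  qed
  have "(m - 1) * (P - Q * y^2) \<le> K * P"
  proof -
    have "(m - 1) * (P - Q * y^2) \<le> (m - 1) * P" using m Q by (intro mult_left_mono) auto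
    also have "\<dots> \<le> K * P" using m P by (intro mult_right_mono) auto
    finally show ?thesis .
  qed
  then have t2a: "\<mu> * ((m - 1) * (P - Q * y^2)) \<le> \<mu> * (K * P)" using mu by (intro mult_left_mono) auto
  have t2b: "\<mu> * ((1 - m) * (P - Q * y^2)) = - (\<mu> * ((m - 1) * (P - Q * y^2)))" by (simp add: algebra_simps)
  have t2: "- (\<mu> * (K * P)) \<le> \<mu> * ((1 - m) * (P - Q * y^2))" using t2a t2b by linarith
  have "P * (1 - y^2) \<le> P - Q" using Q by (simp add: algebra_simps)
  then have "P \<le> (P - Q) / (1 - y^2)" using y2 by (simp add: field_simps)
  then have "K * P \<le> K * ((P - Q) / (1 - y^2))" using m by (intro mult_left_mono) auto
  then have "\<mu> * (K * P) \<le> \<mu> * (K * ((P - Q) / (1 - y^2)))" by (rule mult_left_mono[OF _ less_imp_le[OF mu]])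
  then have t3: "\<mu> * (K * P) \<le> \<mu> * K * ((P - Q) / (1 - y^2))" by (simp only: mult.assoc)
  show ?thesis unfolding L R using t1 t2 t3 by linarith
qed




lemma lb_row:
  fixes \<mu> y :: real
  assumes A: "1 \<le> A" and mu: "0 < \<mu>" and y: "0 < y" "y < 1" and K: "K < A" and k: "k < 2 * A + 1"
  shows "min (2 * real A * (1 - \<mu> + \<mu> * y - \<mu> * y ^ (2 * K + 1))) ((\<mu> * real A * (1 - y)^2 - \<mu> * real K / (1 - y^2)) / y)
      * ww y K (dst k A) \<le> tri.T (2 * A + 1) (aa A \<mu>) (cc \<mu>) (dd A \<mu>) (\<lambda>k. ww y K (dst k A)) k"
proof -
  define c1 where "c1 = 2 * real A * (1 - \<mu> + \<mu> * y - \<mu> * y ^ (2 * K + 1))"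
  define c2 where "c2 = (\<mu> * real A * (1 - y)^2 - \<mu> * real K / (1 - y^2)) / y"
  define u where "u = (\<lambda>k. ww y K (dst k A))"
  have unn: "0 \<le> u i" for i unfolding u_def using ww_nonneg[OF y] .
  have Tk: "tri.T (2 * A + 1) (aa A \<mu>) (cc \<mu>) (dd A \<mu>) u k =
   aa A \<mu> k * u k + (if 0 < k then dd A \<mu> k * u (k - 1) else 0) + (if k < 2 * A then cc \<mu> k * u (k + 1) else 0)"
    by (rule T_inst[OF A mu])
  have dnn: "0 \<le> dd A \<mu> k" using mu k by (simp add: dd_def)
  have cnn: "0 \<le> cc \<mu> k" using mu by (simp add: cc_def)
  consider "K < dst k A" | "k = A" | "k \<noteq> A" "dst k A \<le> K" by linarith
  then have "min c1 c2 * u k \<le> tri.T (2 * A + 1) (aa A \<mu>) (cc \<mu>) (dd A \<mu>) u k"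
  proof cases
    case 1
    then have "u k = 0" unfolding u_def ww_def by simp
    moreover have "0 \<le> (if 0 < k then dd A \<mu> k * u (k - 1) else 0)" using dnn unn by simp
    moreover have "0 \<le> (if k < 2 * A then cc \<mu> k * u (k + 1) else 0)" using cnn unn by simp
    ultimately show ?thesis unfolding Tk by simp
  next
    case 2
    define Z where "Z = y ^ (2 * K + 1)"
    have Zy: "Z \<le> y" unfolding Z_def using power_decreasing[of 1 "2 * K + 1" y] y by simp
    have Z0: "0 \<le> Z" unfolding Z_def using y by simp
    have d: "dst (A - 1) A = 1" "dst (A + 1) A = 1" "dst A A = 0" using A by (auto simp: dst_def)
    have w0: "u A = 1 - Z * y" unfolding u_def d Z_def using ww_formula[of 0 K y] by simp
    have w1: "u (A - 1) = y - Z" "u (A + 1) = y - Z" unfolding u_def d Z_def using ww_formula[of 1 K y] by simp_all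
    have T: "tri.T (2 * A + 1) (aa A \<mu>) (cc \<mu>) (dd A \<mu>) u k
       = (2 * real A - \<mu> * (2 * real A)) * (1 - Z * y) + 2 * (\<mu> * (real A + 1)) * (y - Z)"
    proof -
      have "tri.T (2 * A + 1) (aa A \<mu>) (cc \<mu>) (dd A \<mu>) u k = aa A \<mu> A * u A + dd A \<mu> A * u (A - 1) + cc \<mu> A * u (A + 1)"
        unfolding Tk using 2 A by simp
      also have "\<dots> = aa A \<mu> A * (1 - Z * y) + dd A \<mu> A * (y - Z) + cc \<mu> A * (y - Z)"
        by (simp only: w0 w1)
      also have "\<dots> = (2 * real A - \<mu> * (2 * real A)) * (1 - Z * y) + 2 * (\<mu> * (real A + 1)) * (y - Z)"
        by (simp add: aa_def cc_def dd_def fit_def algebra_simps)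
      finally show ?thesis .
    qed
    have "T' - c1 * (1 - Z * y) = 2 * \<mu> * (y - Z) * (1 + real A * Z * y)"
      if "T' = (2 * real A - \<mu> * (2 * real A)) * (1 - Z * y) + 2 * (\<mu> * (real A + 1)) * (y - Z)" for T'
      unfolding that c1_def Z_def by (simp add: algebra_simps power_add)
    moreover have "0 \<le> 2 * \<mu> * (y - Z) * (1 + real A * Z * y)" using mu Zy Z0 y by simp
    ultimately have "c1 * (1 - Z * y) \<le> tri.T (2 * A + 1) (aa A \<mu>) (cc \<mu>) (dd A \<mu>) u k"
      using T by fastforce
    moreover have "min c1 c2 * u k \<le> c1 * u k" using unn by (simp add: mult_right_mono)
    ultimately show ?thesis using 2 w0 by simp
  next
    case 3
    define m where "m = dst k A"
    have m: "1 \<le> m" "m \<le> K" using 3 unfolding m_def dst_def by auto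
    define P where "P = y ^ (m - 1)"
    define Q where "Q = y ^ (2 * K + 1 - m)"
    have P: "0 < P" unfolding P_def using y by simp
    have Q: "0 \<le> Q" unfolding Q_def using y by simp
    have e1: "2 * K + 2 - (m - 1) = (2 * K + 1 - m) + 2" "m = (m - 1) + 1" "2 * K + 2 - m = (2 * K + 1 - m) + 1"
      "2 * K + 2 - (m + 1) = 2 * K + 1 - m" "m + 1 = (m - 1) + 2" using m by auto
    have pw1: "y ^ (2 * K + 2 - (m - 1)) = Q * y^2" unfolding Q_def by (simp only: e1(1) power_add)
    have pw2: "y ^ m = P * y" unfolding P_def by (subst e1(2), simp only: power_add power_one_right)
    have pw3: "y ^ (2 * K + 2 - m) = Q * y" unfolding Q_def by (simp only: e1(3) power_add power_one_right)
    have pw4: "y ^ (2 * K + 2 - (m + 1)) = Q" unfolding Q_def by (simp only: e1(4))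
    have pw5: "y ^ (m + 1) = P * y^2" unfolding P_def by (simp only: e1(5) power_add)
    have wm1: "ww y K (m - 1) = P - Q * y^2"
      using ww_formula[of "m - 1" K y] m pw1 unfolding P_def by simp
    have wm: "ww y K m = P * y - Q * y" using ww_formula[of m K y] m pw2 pw3 by simp
    have wp1: "ww y K (m + 1) = P * y^2 - Q" using ww_formula[of "m + 1" K y] m pw4 pw5 by simp
    have QP: "Q \<le> P * y^2"
    proof -
      have "Q \<le> y ^ (m + 1)" unfolding Q_def using m y by (intro power_decreasing) auto
      then show ?thesis using pw5 by simp
    qed
    have core: "c2 * (P * y - Q * y) \<le> - (2 * real A * \<mu>) * (P * y - Q * y) + \<mu> * (real A - real m + 1) * (P - Q * y^2)
        + \<mu> * (real A + real m + 1) * (P * y^2 - Q)"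
      unfolding c2_def using lb_core[OF mu y, of "real m" "real K" P Q "real A"] m P Q QP by simp
    have aak: "aa A \<mu> k = - (2 * real A * \<mu>)" using 3 by (simp add: aa_def fit_def)
    have "c2 * u k \<le> tri.T (2 * A + 1) (aa A \<mu>) (cc \<mu>) (dd A \<mu>) u k"
    proof (cases "A < k")
      case True
      have kk: "k = A + m" using True unfolding m_def dst_def by simp
      have dd: "dst (k - 1) A = m - 1" "dst (k + 1) A = m + 1" "dst k A = m" using kk m by (auto simp: dst_def)
      have "k < 2 * A" "0 < k" using kk m K by auto
      then have "tri.T (2 * A + 1) (aa A \<mu>) (cc \<mu>) (dd A \<mu>) u k
          = - (2 * real A * \<mu>) * (P * y - Q * y) + dd A \<mu> k * (P - Q * y^2) + cc \<mu> k * (P * y^2 - Q)"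
        unfolding Tk aak using dd wm1 wm wp1 by (simp add: u_def)
      also have "dd A \<mu> k = \<mu> * (real A - real m + 1)" using kk by (simp add: dd_def)
      also have "cc \<mu> k = \<mu> * (real A + real m + 1)" using kk by (simp add: cc_def algebra_simps)
      finally show ?thesis using core dd wm unfolding u_def by simp
    next
      case False
      have kk: "A = k + m" using False 3 unfolding m_def dst_def by auto
      have dd: "dst (k - 1) A = m + 1" "dst (k + 1) A = m - 1" "dst k A = m" using kk m K by (auto simp: dst_def)
      have "k < 2 * A" "0 < k" using kk m K by auto
      then have "tri.T (2 * A + 1) (aa A \<mu>) (cc \<mu>) (dd A \<mu>) u k
          = - (2 * real A * \<mu>) * (P * y - Q * y) + dd A \<mu> k * (P * y^2 - Q) + cc \<mu> k * (P - Q * y^2)"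
        unfolding Tk aak using dd wm1 wm wp1 by (simp add: u_def)
      also have "dd A \<mu> k = \<mu> * (real A + real m + 1)" using kk by (simp add: dd_def)
      also have "cc \<mu> k = \<mu> * (real A - real m + 1)" using kk by (simp add: cc_def algebra_simps)
      finally have Teq: "tri.T (2 * A + 1) (aa A \<mu>) (cc \<mu>) (dd A \<mu>) u k
          = - (2 * real A * \<mu>) * (P * y - Q * y) + \<mu> * (real A + real m + 1) * (P * y^2 - Q) + \<mu> * (real A - real m + 1) * (P - Q * y^2)" .
      have uk: "c2 * u k = c2 * (P * y - Q * y)" unfolding u_def using dd(3) wm by simp
      show ?thesis using Teq uk core by linarith
    qed
    moreover have "min c1 c2 * u k \<le> c2 * u k" using unn by (simp add: mult_right_mono)
    ultimately show ?thesis by simp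
  qed
  then show ?thesis unfolding c1_def c2_def u_def .
qed




fun pw :: "nat \<Rightarrow> nat \<Rightarrow> real" where
  "pw A 0 = 1"
| "pw A (Suc k) = pw A k * (real k + 1) / (real (2 * A) - real k)"

lemma pw_pos: "k < 2 * A + 1 \<Longrightarrow> 0 < pw A k"
  by (induction k) auto

lemma pw_bal: assumes "k + 1 < 2 * A + 1" "0 < \<mu>"
  shows "pw A (Suc k) * dd A \<mu> (Suc k) = pw A k * cc \<mu> k"
proof -
  have ne: "real (2 * A) - real k \<noteq> 0" using assms by simp
  have "dd A \<mu> (Suc k) = \<mu> * (real (2 * A) - real k)" by (simp add: dd_def)
  then have "pw A (Suc k) * dd A \<mu> (Suc k) = pw A k * (real k + 1) / (real (2 * A) - real k) * (\<mu> * (real (2 * A) - real k))"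
    by (simp only: pw.simps)
  also have "\<dots> = pw A k * (\<mu> * (real k + 1))" using ne by (simp add: field_simps)
  finally show ?thesis by (simp add: cc_def)
qed

lemma bounds:
  fixes \<mu> x y :: real
  assumes A: "1 \<le> A" and mu: "0 < \<mu>" and y: "0 < y" "y < 1" and K: "K < A"
    and x: "0 < x" "x < 1" "\<mu> * x^2 + 2 * x - \<mu> = 0"
  shows "min (2 * real A * (1 - \<mu> + \<mu> * y - \<mu> * y ^ (2 * K + 1))) ((\<mu> * real A * (1 - y)^2 - \<mu> * real K / (1 - y^2)) / y)
           \<le> mbar A \<mu>"
    "mbar A \<mu> \<le> 2 * real A * (1 - \<mu> + \<mu> * x) + 2 * \<mu>"
proof -
  define C' where "C' = 2 * real A * (1 - \<mu> + \<mu> * x) + 2 * \<mu>"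
  define c0 where "c0 = min (2 * real A * (1 - \<mu> + \<mu> * y - \<mu> * y ^ (2 * K + 1))) ((\<mu> * real A * (1 - y)^2 - \<mu> * real K / (1 - y^2)) / y)"
  have me: "mbar A \<mu> = dom_eig (tri.TM (2 * A + 1) (aa A \<mu>) (cc \<mu>) (dd A \<mu>))"
    unfolding mbar_def mat_eq[OF A mu] ..
  have h1: "\<And>k. k < 2 * A + 1 \<Longrightarrow> 0 < x ^ dst k A" using x by simp
  have h2: "\<And>k. k < 2 * A + 1 \<Longrightarrow> tri.T (2 * A + 1) (aa A \<mu>) (cc \<mu>) (dd A \<mu>) (\<lambda>k. x ^ dst k A) k \<le> C' * x ^ dst k A"
    unfolding C'_def by (rule ub_row[OF A mu x])
  have h3: "\<And>k. k < 2 * A + 1 \<Longrightarrow> 0 \<le> ww y K (dst k A)" using ww_nonneg[OF y] by simp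
  have h4: "A < 2 * A + 1" by simp
  have h5: "0 < ww y K (dst A A)" using ww0_pos[OF y] by (simp add: dst_eq)
  have h6: "\<And>k. k < 2 * A + 1 \<Longrightarrow> c0 * ww y K (dst k A) \<le> tri.T (2 * A + 1) (aa A \<mu>) (cc \<mu>) (dd A \<mu>) (\<lambda>k. ww y K (dst k A)) k"
    unfolding c0_def by (rule lb_row[OF A mu y K])
  have h7: "\<And>k. k < 2 * A + 1 \<Longrightarrow> 0 < pw A k" by (rule pw_pos)
  have h8: "\<And>k. k + 1 < 2 * A + 1 \<Longrightarrow> pw A (Suc k) * dd A \<mu> (Suc k) = pw A k * cc \<mu> k"
    using pw_bal mu by blast
  note mb = tri.max_bounds[OF tri_inst[OF A mu] h1 h2 h3 h4 h5 h6 h7 h8]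
  show "c0 \<le> mbar A \<mu>" using mb(1) me by simp
  show "mbar A \<mu> \<le> C'" using mb(2) me by simp
qed




lemma mu0: assumes A: "1 \<le> A" shows "mbar A 0 = real (2 * A)"
proof -
  define n where "n = 2 * A + 1"
  have Mc: "M_mat A \<in> carrier_mat n n" unfolding M_mat_def n_def by simp
  have eqM: "M_mat A + 0 \<cdot>\<^sub>m Q_mat (2 * A) = M_mat A"
    by (rule eq_matI) (auto simp: M_mat_def Q_mat_def)
  have Mv: "(M_mat A *\<^sub>v v) $ i = fit A i * v $ i" if "i < n" "v \<in> carrier_vec n" for v i
  proof -
    have "(M_mat A *\<^sub>v v) $ i = (\<Sum>j\<in>{0..<n}. (if i = j then fit A i else 0) * v $ j)"
      using that unfolding M_mat_def n_def by (simp add: scalar_prod_def)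
    also have "\<dots> = (\<Sum>j\<in>{0..<n}. if i = j then fit A i * v $ j else 0)" by (rule sum.cong) auto
    also have "\<dots> = fit A i * v $ i" using that by simp
    finally show ?thesis .
  qed
  have fin: "finite {k. eigenvalue (M_mat A) k}"
    using card_finite_spectrum(1)[OF Mc] unfolding spectrum_def .
  have e2: "eigenvalue (M_mat A) (real (2 * A))"
    unfolding eigenvalue_def eigenvector_def
  proof (intro exI conjI)
    show "(unit_vec n A :: real vec) \<in> carrier_vec (dim_row (M_mat A))" using Mc by simp
    show "(unit_vec n A :: real vec) \<noteq> 0\<^sub>v (dim_row (M_mat A))"
    proof
      assume "(unit_vec n A :: real vec) = 0\<^sub>v (dim_row (M_mat A))"
      then have "(unit_vec n A :: real vec) = 0\<^sub>v n" using Mc by simp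
      then have "(unit_vec n A :: real vec) $ A = 0\<^sub>v n $ A" by (rule arg_cong)
      then show False unfolding n_def by simp
    qed
    show "M_mat A *\<^sub>v (unit_vec n A :: real vec) = real (2 * A) \<cdot>\<^sub>v unit_vec n A"
      by (rule eq_vecI) (use Mc Mv in \<open>auto simp: fit_def unit_vec_def\<close>)
  qed
  have le: "l \<le> real (2 * A)" if "eigenvalue (M_mat A) l" for l
  proof -
    from that obtain v where v: "v \<in> carrier_vec n" "v \<noteq> 0\<^sub>v n" "M_mat A *\<^sub>v v = l \<cdot>\<^sub>v v"
      unfolding eigenvalue_def eigenvector_def using Mc by auto
    obtain i where i: "i < n" "v $ i \<noteq> 0"
    proof (rule ccontr)
      assume "\<not> thesis"
      then have "\<forall>i<n. v $ i = 0" using that by blast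
      then have "v = 0\<^sub>v n" using v(1) by (auto intro!: eq_vecI)
      then show False using v(2) by simp
    qed
    have "fit A i * v $ i = l * v $ i" using Mv[OF i(1) v(1)] v(3) v(1) i(1) by auto
    then have "l = fit A i" using i(2) by simp
    then show ?thesis by (simp add: fit_def)
  qed
  have "dom_eig (M_mat A) = real (2 * A)" unfolding dom_eig_def
    by (rule Max_eqI) (use fin e2 le in auto)
  then show ?thesis unfolding mbar_def eqM .
qed

lemma pos_case:
  fixes \<mu> :: real assumes mu: "0 < \<mu>"
  shows "(\<lambda>A. rbar A \<mu>) \<longlonglongrightarrow> sqrt (\<mu>\<^sup>2 + 1) - \<mu>"
proof -
  define s where "s = sqrt (\<mu>\<^sup>2 + 1)"
  define x where "x = (s - 1) / \<mu>"
  define r where "r = s - \<mu>"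
  have s2: "s^2 = \<mu>^2 + 1" unfolding s_def by simp
  have s0: "0 \<le> s" unfolding s_def by simp
  have s1: "1 < s" unfolding s_def using mu by (simp add: real_less_rsqrt)
  have s3: "s < \<mu> + 1"
  proof -
    have "s^2 < (\<mu> + 1)^2" using s2 mu by (simp add: power2_eq_square algebra_simps)
    then show ?thesis using s0 mu by (smt (verit) power_mono)
  qed
  have mx: "\<mu> * x = s - 1" unfolding x_def using mu by simp
  have x0: "0 < x" unfolding x_def using mu s1 by simp
  have x1: "x < 1" unfolding x_def using mu s3 by simp
  have xe: "\<mu> * x^2 + 2 * x - \<mu> = 0"
  proof -
    have "\<mu> * (\<mu> * x^2 + 2 * x - \<mu>) = (\<mu> * x)^2 + 2 * (\<mu> * x) - \<mu>^2" by (simp add: algebra_simps power2_eq_square)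
    also have "\<dots> = 0" unfolding mx using s2 by (simp add: algebra_simps power2_eq_square)
    finally show ?thesis using mu by simp
  qed
  have rr: "r = 1 - \<mu> + \<mu> * x" unfolding r_def mx by simp
  show ?thesis unfolding s_def[symmetric] r_def[symmetric]
  proof (rule LIMSEQ_I)
    fix e :: real assume e: "0 < e"
    define \<delta> where "\<delta> = min (x / 2) (e / (4 * \<mu>))"
    define y where "y = x - \<delta>"
    have d0: "0 < \<delta>" unfolding \<delta>_def using x0 e mu by simp
    have y0: "0 < y" unfolding y_def \<delta>_def using x0 by simp
    have yx: "y \<le> x" unfolding y_def using d0 by simp
    have y1: "y < 1" using yx x1 by simp
    have md: "\<mu> * (x - y) \<le> e / 4"
    proof -
      have "x - y \<le> e / (4 * \<mu>)" unfolding y_def \<delta>_def by simp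
      then have "\<mu> * (x - y) \<le> \<mu> * (e / (4 * \<mu>))" using mu by (intro mult_left_mono) auto
      then show ?thesis using mu by simp
    qed
    obtain K where K: "y ^ K < e / (4 * \<mu>)" using real_arch_pow_inv[of "e / (4 * \<mu>)" y] e mu y1 by auto
    have Z: "\<mu> * y ^ (2 * K + 1) < e / 4"
    proof -
      have "y ^ (2 * K + 1) \<le> y ^ K" using y0 y1 by (intro power_decreasing) auto
      then have "y ^ (2 * K + 1) < e / (4 * \<mu>)" using K by simp
      then have "\<mu> * y ^ (2 * K + 1) < \<mu> * (e / (4 * \<mu>))" by (rule mult_strict_left_mono[OF _ mu])
      also have "\<mu> * (e / (4 * \<mu>)) = e / 4" using mu by simp
      finally show ?thesis .
    qed
    have yy: "0 < 1 - y^2" using y0 y1 by (simp add: power_less_one_iff)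
    have rho: "1 - \<mu> + \<mu> * y \<le> \<mu> * (1 - y)^2 / (2 * y)"
    proof -
      have "\<mu> * y^2 + 2 * y \<le> \<mu> * x^2 + 2 * x"
        using yx y0 mu by (intro add_mono mult_left_mono power_mono) auto
      then have "0 \<le> \<mu> - 2 * y - \<mu> * y^2" using xe by simp
      then have "2 * y * (1 - \<mu> + \<mu> * y) \<le> \<mu> * (1 - y)^2"
        by (simp add: algebra_simps power2_eq_square)
      then show ?thesis using y0 by (simp add: field_simps)
    qed
    define B where "B = 2 * \<mu> * real K / (e * y * (1 - y^2))"
    obtain N0 :: nat where N0: "max (real K) (max (\<mu> / e) B) < real N0"
      using reals_Archimedean2 by blast
    show "\<exists>no. \<forall>A\<ge>no. norm (rbar A \<mu> - r) < e"
    proof (intro exI allI impI)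
      fix A assume A: "N0 + 1 \<le> A"
      have A1: "1 \<le> A" using A by simp
      have KA: "K < A" using A N0 by simp
      have Ae: "\<mu> / e < real A" using A N0 by simp
      have AB: "B < real A" using A N0 by simp
      have Apos: "0 < real A" using A1 by simp
      note bd = bounds[OF A1 mu y0 y1 KA x0 x1 xe]
      define c1 where "c1 = 2 * real A * (1 - \<mu> + \<mu> * y - \<mu> * y ^ (2 * K + 1))"
      define c2 where "c2 = (\<mu> * real A * (1 - y)^2 - \<mu> * real K / (1 - y^2)) / y"
      have md2: "\<mu> * x - \<mu> * y \<le> e / 4" using md by (simp add: algebra_simps)
      have "r - e / 2 \<le> 1 - \<mu> + \<mu> * y - \<mu> * y ^ (2 * K + 1)" using rr md2 Z by linarith
      then have c1b: "2 * real A * (r - e / 2) \<le> c1" unfolding c1_def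
        using Apos by (intro mult_left_mono) auto
      have c2b: "2 * real A * (r - e / 2) \<le> c2"
      proof -
        have c2e: "c2 = 2 * real A * (\<mu> * (1 - y)^2 / (2 * y)) - \<mu> * real K / ((1 - y^2) * y)"
          unfolding c2_def using y0 yy by (simp add: field_simps)
        have "\<mu> * real K / ((1 - y^2) * y) \<le> 2 * real A * (e / 4)"
        proof -
          have "2 * \<mu> * real K < real A * (e * y * (1 - y^2))"
            using AB e y0 yy unfolding B_def by (simp add: field_simps)
          then show ?thesis using y0 yy by (simp add: field_simps)
        qed
        moreover have "2 * real A * (r - e / 4) \<le> 2 * real A * (\<mu> * (1 - y)^2 / (2 * y))"
        proof -
          have "r - e / 4 \<le> \<mu> * (1 - y)^2 / (2 * y)" using rho md2 rr by linarith
          then show ?thesis using Apos by (intro mult_left_mono) auto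
        qed
        moreover have "2 * real A * (r - e / 2) = 2 * real A * (r - e / 4) - 2 * real A * (e / 4)"
          by (simp add: algebra_simps)
        ultimately show ?thesis unfolding c2e by linarith
      qed
      have lo: "2 * real A * (r - e / 2) \<le> mbar A \<mu>"
        using bd(1) c1b c2b unfolding c1_def[symmetric] c2_def[symmetric] by linarith
      have hi: "mbar A \<mu> \<le> 2 * real A * r + 2 * \<mu>" using bd(2) rr by simp
      have rb: "rbar A \<mu> = mbar A \<mu> / (2 * real A)" unfolding rbar_def by simp
      have "r - e / 2 \<le> rbar A \<mu>" unfolding rb using lo Apos by (simp add: field_simps)
      moreover have "rbar A \<mu> \<le> r + \<mu> / real A" unfolding rb using hi Apos by (simp add: field_simps)
      moreover have "\<mu> / real A < e" using Ae e Apos mu by (simp add: field_simps)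
      ultimately show "norm (rbar A \<mu> - r) < e" using e by simp
    qed
  qed
qed

theorem proposition3:
  fixes \<mu> :: real
  assumes "\<mu> \<ge> 0"
  shows "(\<lambda>A. rbar A \<mu>) \<longlonglongrightarrow> sqrt (\<mu>\<^sup>2 + 1) - \<mu>"
proof (cases "\<mu> = 0")
  case True
  have "\<forall>A\<ge>1. rbar A \<mu> = 1" using True mu0 by (simp add: rbar_def)
  then have "\<forall>\<^sub>F A in sequentially. rbar A \<mu> = 1" by (auto simp: eventually_sequentially)
  then have "(\<lambda>A. rbar A \<mu>) \<longlonglongrightarrow> 1" by (rule tendsto_eventually)
  then show ?thesis using True by simp
next
  case False
  then show ?thesis using pos_case assms by simp
qed



end
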